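(* Let $(q_l)_{l\ge1}$ be positive numbers with $q_1=1$ and $0<R:=\lim_{l\to\infty}q_l/q_{l+1}<\infty$, and assume (NEQ): $\tilde f(1)<1$, or $\tilde f(1)=1$ and $\tilde g(1)=\infty$. Let $\rho^*>0$. Then $$\inf\{\tilde A(z):\ z\in X_{0+},\ \rho(z)=\rho^*\}=0,$$ and this infimum is not attained by any $z\in X_{0+}$ with $\rho(z)=\rho^*$.
   Context: $X=\{z=(z_l)_{l\ge1}:\sum_l l|z_l|<\infty\}$, $X_{0+}$ its nonnegative elements, $\rho(z)=\sum_l lz_l$, $N(z)=\sum_l z_l$. Set $\tilde q_l=q_lR^l$, $\tilde f(\mu)=\sum_{l\ge1}\tilde q_l\mu^l$, $\tilde g(\mu)=\sum_{l\ge1}l\tilde q_l\mu^l$, $\tilde f(1)=\sum_l\tilde q_l\in(0,\infty]$, $\tilde g(1)=\sum_l l\tilde q_l\in(0,\infty]$. For $z\in X_{0+}\setminus\{0\}$, $\tilde A(z)=\sum_l z_l\ln\big(z_l/(\tilde q_lN(z))\big)$ with $0\ln0=0$, and $\tilde A(0)=0$. *)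

theory Defs
  imports "HOL-Analysis.Analysis"
begin

(* Sequences z = (z_l)_{l>=1} are represented as functions nat => real;
   the unused index 0 is fixed to 0 in the carrier X_{0+}. *)

definition X0plus :: "(nat \<Rightarrow> real) set" where
  "X0plus = {z. z 0 = 0 \<and> (\<forall>l\<ge>1. 0 \<le> z l) \<and>
                summable (\<lambda>l. real (Suc l) * \<bar>z (Suc l)\<bar>)}"

definition rho :: "(nat \<Rightarrow> real) \<Rightarrow> real" where
  "rho z = (\<Sum>l. real (Suc l) * z (Suc l))"

definition Nmass :: "(nat \<Rightarrow> real) \<Rightarrow> real" where
  "Nmass z = (\<Sum>l. z (Suc l))"

definition qt :: "(nat \<Rightarrow> real) \<Rightarrow> real \<Rightarrow> nat \<Rightarrow> real" where
  "qt q R l = q l * R ^ l"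

(* tilde A(z) = sum_{l>=1} z_l ln(z_l / (tilde q_l N(z))), with 0 ln 0 = 0
   (automatic, since 0 * ln _ = 0), and tilde A(0) = 0 *)
definition Atilde :: "(nat \<Rightarrow> real) \<Rightarrow> real \<Rightarrow> (nat \<Rightarrow> real) \<Rightarrow> real" where
  "Atilde q R z = (if z = (\<lambda>_. 0) then 0 else
     (\<Sum>l. z (Suc l) * ln (z (Suc l) / (qt q R (Suc l) * Nmass z))))"

(* condition (NEQ): f~(1) < 1, or f~(1) = 1 and g~(1) = infinity
   (f~(1), g~(1) are sums of nonnegative terms, so "< infinity" = summable) *)
definition NEQ :: "(nat \<Rightarrow> real) \<Rightarrow> real \<Rightarrow> bool" where
  "NEQ q R \<longleftrightarrow>
     (summable (\<lambda>l. qt q R (Suc l)) \<and> (\<Sum>l. qt q R (Suc l)) < 1) \<or>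
     (summable (\<lambda>l. qt q R (Suc l)) \<and> (\<Sum>l. qt q R (Suc l)) = 1 \<and>
      \<not> summable (\<lambda>l. real (Suc l) * qt q R (Suc l)))"

end

theory Submission
  imports Defs
begin

lemma qt_lower:
  fixes q :: "nat \<Rightarrow> real" and R d :: real
  assumes qpos: "\<forall>l\<ge>1. 0 < q l"
    and Rlim: "(\<lambda>l. q l / q (Suc l)) \<longlonglongrightarrow> R"
    and Rpos: "0 < R" and dpos: "0 < d"
  shows "\<exists>c>0. \<forall>l\<ge>1. c * exp (- d * real l) \<le> qt q R l"
proof -
  have "(\<lambda>l. R / (q l / q (Suc l))) \<longlonglongrightarrow> R / R"
    by (intro tendsto_divide tendsto_const Rlim) (use Rpos in auto)
  hence lim1: "(\<lambda>l. R / (q l / q (Suc l))) \<longlonglongrightarrow> 1" using Rpos by simp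
  have "exp (- d) < 1" using dpos by simp
  then have "eventually (\<lambda>l. exp (- d) < R / (q l / q (Suc l))) sequentially"
    using lim1 order_tendstoD(1) by blast
  then obtain M0 where M0: "\<And>l. l \<ge> M0 \<Longrightarrow> exp (- d) < R / (q l / q (Suc l))"
    by (auto simp: eventually_sequentially)
  define M where "M = max M0 1"
  have qtpos: "\<And>l. l \<ge> 1 \<Longrightarrow> 0 < qt q R l" using qpos Rpos by (simp add: qt_def)
  have step: "exp (- d) * qt q R l \<le> qt q R (Suc l)" if "l \<ge> M" for l
  proof -
    have l1: "l \<ge> 1" "l \<ge> M0" using that by (auto simp: M_def)
    have ql: "q l > 0" "q (Suc l) > 0" using qpos l1 by auto
    have "R / (q l / q (Suc l)) = qt q R (Suc l) / qt q R l"
      using ql Rpos by (simp add: qt_def field_simps)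
    with M0[OF l1(2)] have "exp (- d) < qt q R (Suc l) / qt q R l" by simp
    thus ?thesis using qtpos[OF l1(1)] by (simp add: field_simps)
  qed
  have ind: "qt q R M * exp (- d * real k) \<le> qt q R (M + k)" for k
  proof (induction k)
    case 0 then show ?case by simp
  next
    case (Suc k)
    have "qt q R M * exp (- d * real (Suc k)) = exp (- d) * (qt q R M * exp (- d * real k))"
      by (simp add: algebra_simps flip: exp_add)
    also have "\<dots> \<le> exp (- d) * qt q R (M + k)" using Suc by simp
    also have "\<dots> \<le> qt q R (Suc (M + k))" using step[of "M+k"] by simp
    finally show ?case by simp
  qed
  define c where "c = Min (qt q R ` {1..M})"
  have M1: "M \<ge> 1" by (simp add: M_def)
  have cpos: "c > 0" unfolding c_def using qtpos M1 by (subst Min_gr_iff) auto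
  have cle: "c \<le> qt q R l" if "l \<in> {1..M}" for l unfolding c_def using that by simp
  show ?thesis
  proof (intro exI[of _ c] conjI allI impI cpos)
    fix l :: nat assume l: "l \<ge> 1"
    show "c * exp (- d * real l) \<le> qt q R l"
    proof (cases "l \<le> M")
      case True
      have "c * exp (- d * real l) \<le> c * 1" using cpos dpos by (intro mult_left_mono) auto
      also have "\<dots> \<le> qt q R l" using cle True l by simp
      finally show ?thesis .
    next
      case False
      then obtain k where k: "l = M + k" by (metis le_add_diff_inverse nat_le_linear)
      have "c * exp (- d * real l) \<le> qt q R M * exp (- d * real k)"
        using cpos dpos cle[of M] M1 k by (intro mult_mono) auto
      also have "\<dots> \<le> qt q R l" using ind k by simp
      finally show ?thesis .
    qed
  qed
qed



lemma ln_strict: "0 < (x::real) \<Longrightarrow> x \<noteq> 1 \<Longrightarrow> ln x < x - 1"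
proof -
  assume x: "0 < x" "x \<noteq> 1"
  have "ln x \<le> x - 1" using x ln_le_minus_one by auto
  moreover have "ln x \<noteq> x - 1"
  proof
    assume e: "ln x = x - 1"
    have "ln (sqrt x) \<le> sqrt x - 1" using x ln_le_minus_one by auto
    moreover have "ln (sqrt x) = ln x / 2" using x by (simp add: ln_sqrt)
    ultimately have "x - 1 \<le> 2 * sqrt x - 2" using e by simp
    hence "(sqrt x - 1)^2 \<le> 0" using x by (simp add: power2_eq_square algebra_simps)
    hence "sqrt x = 1" by simp
    thus False using x by simp
  qed
  ultimately show ?thesis by simp
qed

lemma A_pos:
  fixes q :: "nat \<Rightarrow> real" and R :: real
  assumes qpos: "\<forall>l\<ge>1. 0 < q l"
    and Rlim: "(\<lambda>l. q l / q (Suc l)) \<longlonglongrightarrow> R"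
    and Rpos: "0 < R"
    and neq: "NEQ q R"
    and zX: "z \<in> X0plus" and z0: "z \<noteq> (\<lambda>_. 0)"
  shows "Atilde q R z > 0"
proof -
  define Q where "Q = (\<lambda>l. qt q R (Suc l))"
  define N where "N = Nmass z"
  define a where "a = (\<lambda>l. z (Suc l) * ln (z (Suc l) / (Q l * N)))"
  have Qpos: "Q l > 0" for l using qpos Rpos by (simp add: Q_def qt_def)
  have Qsum: "summable Q" and Sle: "suminf Q \<le> 1" using neq by (auto simp: NEQ_def Q_def)
  have z00: "z 0 = 0" and znn: "\<And>l. 0 \<le> z (Suc l)"
    and zrs: "summable (\<lambda>l. real (Suc l) * \<bar>z (Suc l)\<bar>)" using zX by (auto simp: X0plus_def)
  have zrs': "summable (\<lambda>l. real (Suc l) * z (Suc l))" using zrs znn by simp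
  have zle: "z (Suc n) \<le> real (Suc n) * z (Suc n)" for n
    using znn[of n] by (simp add: algebra_simps)
  have zs: "summable (\<lambda>l. z (Suc l))"
    by (rule summable_comparison_test[OF _ zrs']) (use znn zle in \<open>auto intro!: exI[of _ 0]\<close>)
  obtain k where k: "z (Suc k) \<noteq> 0"
  proof -
    from z0 obtain m where "z m \<noteq> 0" by auto
    with z00 show ?thesis using that by (cases m) auto
  qed
  have Npos: "N > 0" unfolding N_def Nmass_def
    using k znn by (intro suminf_pos2[OF zs, of k]) (auto simp: order.order_iff_strict)
  define P where "P = (\<Sum>l. real (Suc l) * z (Suc l))"
  have zleP: "z (Suc l) \<le> P" for l
  proof -
    have "z (Suc l) \<le> real (Suc l) * z (Suc l)" by (rule zle)
    also have "\<dots> = sum (\<lambda>l. real (Suc l) * z (Suc l)) {l}" by simp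
    also have "\<dots> \<le> P" unfolding P_def using zrs' znn by (intro sum_le_suminf) auto
    finally show ?thesis .
  qed
  obtain c where cpos: "c > 0" and cq: "\<And>l. l \<ge> 1 \<Longrightarrow> c * exp (- 1 * real l) \<le> qt q R l"
    using qt_lower[OF qpos Rlim Rpos, of 1] by auto
  define K where "K = P + 1 + \<bar>ln c\<bar> + \<bar>ln N\<bar>"
  have alow: "z (Suc l) - Q l * N \<le> a l" for l
  proof (cases "z (Suc l) = 0")
    case True then show ?thesis using Qpos[of l] Npos by (simp add: a_def)
  next
    case False
    hence zp: "z (Suc l) > 0" using znn[of l] by simp
    have "ln (Q l * N / z (Suc l)) \<le> Q l * N / z (Suc l) - 1"
      using Qpos[of l] Npos zp by (intro ln_le_minus_one) simp
    moreover have "ln (Q l * N / z (Suc l)) = - ln (z (Suc l) / (Q l * N))"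
      using Qpos[of l] Npos zp by (simp add: ln_div)
    ultimately have "1 - Q l * N / z (Suc l) \<le> ln (z (Suc l) / (Q l * N))" by simp
    hence "z (Suc l) * (1 - Q l * N / z (Suc l)) \<le> a l"
      unfolding a_def using zp by (intro mult_left_mono) auto
    thus ?thesis using zp by (simp add: algebra_simps)
  qed
  have aup: "a l \<le> K * (real (Suc l) * z (Suc l))" for l
  proof (cases "z (Suc l) = 0")
    case True then show ?thesis by (simp add: a_def)
  next
    case False
    hence zp: "z (Suc l) > 0" using znn[of l] by simp
    have lnsplit: "ln (z (Suc l) / (Q l * N)) = ln (z (Suc l)) - ln (Q l) - ln N"
      using Qpos[of l] Npos zp by (simp add: ln_div ln_mult)
    have "ln (z (Suc l)) \<le> P" using ln_le_minus_one[OF zp] zleP[of l] by simp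
    moreover have "- ln (Q l) \<le> real (Suc l) * (1 + \<bar>ln c\<bar>)"
    proof -
      have "c * exp (- 1 * real (Suc l)) \<le> Q l" using cq[of "Suc l"] by (simp add: Q_def)
      hence "ln (c * exp (- 1 * real (Suc l))) \<le> ln (Q l)"
        using cpos Qpos[of l] by (subst ln_le_cancel_iff) auto
      hence "ln c - real (Suc l) \<le> ln (Q l)" using cpos by (simp add: ln_mult)
      moreover have "- ln c \<le> real (Suc l) * \<bar>ln c\<bar>"
      proof -
        have "\<bar>ln c\<bar> \<le> real (Suc l) * \<bar>ln c\<bar>" by (simp add: algebra_simps)
        thus ?thesis by linarith
      qed
      ultimately show ?thesis by (simp add: algebra_simps)
    qed
    moreover have "P \<le> real (Suc l) * P" using zleP[of l] znn[of l] by (simp add: algebra_simps)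
    moreover have "- ln N \<le> real (Suc l) * \<bar>ln N\<bar>"
    proof -
      have "\<bar>ln N\<bar> \<le> real (Suc l) * \<bar>ln N\<bar>" by (simp add: algebra_simps)
      thus ?thesis by linarith
    qed
    moreover have "real (Suc l) * K = real (Suc l) * P + real (Suc l) * (1 + \<bar>ln c\<bar>) + real (Suc l) * \<bar>ln N\<bar>"
      by (simp add: K_def algebra_simps)
    ultimately have "ln (z (Suc l) / (Q l * N)) \<le> real (Suc l) * K"
      unfolding lnsplit by linarith
    hence "a l \<le> z (Suc l) * (real (Suc l) * K)" unfolding a_def using zp by (intro mult_left_mono) auto
    thus ?thesis by (simp add: algebra_simps)
  qed
  have asum: "summable a"
  proof (rule summable_comparison_test[of _ "\<lambda>l. Q l * N + K * (real (Suc l) * z (Suc l)) + z (Suc l)"])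
    have Kpos: "K \<ge> 0" unfolding K_def using zleP[of 0] znn[of 0] by simp
    have "norm (a n) \<le> Q n * N + K * (real (Suc n) * z (Suc n)) + z (Suc n)" for n
    proof -
      have "0 \<le> K * (real (Suc n) * z (Suc n))" using Kpos znn[of n] by simp
      moreover have "0 \<le> Q n * N" using Qpos[of n] Npos by simp
      ultimately show ?thesis using alow[of n] aup[of n] znn[of n] by (simp add: abs_le_iff)
    qed
    thus "\<exists>N0. \<forall>n\<ge>N0. norm (a n) \<le> Q n * N + K * (real (Suc n) * z (Suc n)) + z (Suc n)"
      by blast
    show "summable (\<lambda>l. Q l * N + K * (real (Suc l) * z (Suc l)) + z (Suc l))"
      by (intro summable_add summable_mult zs zrs' summable_mult2 Qsum)
  qed
  define d where "d = (\<lambda>l. a l - z (Suc l) + Q l * N)"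
  have dnn: "d l \<ge> 0" for l using alow[of l] by (simp add: d_def)
  have dsum: "summable d" unfolding d_def
    by (intro summable_add summable_diff asum zs summable_mult2 Qsum)
  have A_eq: "Atilde q R z = suminf a" using z0 by (simp add: Atilde_def a_def Q_def N_def)
  have Nm: "N = (\<Sum>l. z (Suc l))" by (simp add: N_def Nmass_def)
  have "suminf d = suminf a - N + suminf Q * N"
  proof -
    have zN: "(\<lambda>l. z (Suc l)) sums N" using summable_sums[OF zs] Nm by simp
    have "d sums (suminf a - N + suminf Q * N)" unfolding d_def
      by (intro sums_add sums_diff summable_sums asum zN sums_mult2 Qsum)
    thus ?thesis by (simp add: sums_unique[symmetric])
  qed
  hence A2: "Atilde q R z = suminf d + N * (1 - suminf Q)" using A_eq by (simp add: algebra_simps)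
  have sd0: "suminf d \<ge> 0" using dnn dsum by (simp add: suminf_nonneg)
  have N1: "N * (1 - suminf Q) \<ge> 0" using Npos Sle by simp
  show ?thesis
  proof (rule ccontr)
    assume "\<not> Atilde q R z > 0"
    hence "suminf d = 0" and "N * (1 - suminf Q) = 0" using A2 sd0 N1 by linarith+
    hence d0: "\<And>l. d l = 0" and S1: "suminf Q = 1" using suminf_eq_zero_iff[OF dsum] dnn Npos by auto
    have zeq: "z (Suc l) = Q l * N" for l
    proof (cases "z (Suc l) = 0")
      case True
      then have "d l = Q l * N" by (simp add: d_def a_def)
      then show ?thesis using d0[of l] Qpos[of l] Npos by simp
    next
      case False
      hence zp: "z (Suc l) > 0" using znn[of l] by simp
      define x where "x = Q l * N / z (Suc l)"
      have xp: "x > 0" using zp Qpos[of l] Npos by (simp add: x_def)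
      have "ln (z (Suc l) / (Q l * N)) = - ln x"
        using Qpos[of l] Npos zp by (simp add: x_def ln_div)
      hence "d l = z (Suc l) * (x - 1 - ln x)"
        using zp by (simp add: d_def a_def x_def field_simps)
      hence "x - 1 - ln x = 0" using d0[of l] zp by simp
      hence "x = 1" using ln_strict[OF xp] by force
      thus ?thesis using zp by (simp add: x_def field_simps)
    qed
    have "summable (\<lambda>l. (real (Suc l) * z (Suc l)) / N)" by (intro summable_divide zrs')
    hence "summable (\<lambda>l. real (Suc l) * qt q R (Suc l))" using Npos by (simp add: zeq Q_def)
    thus False using neq S1 by (simp add: NEQ_def Q_def)
  qed
qed


lemma delta_facts:
  fixes q :: "nat \<Rightarrow> real" and R rhostar :: real and K :: nat
  assumes rhopos: "0 < rhostar"
  defines "w \<equiv> rhostar / real (Suc K)"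
  defines "z \<equiv> (\<lambda>l. if l = Suc K then w else (0::real))"
  shows "z \<in> X0plus" "rho z = rhostar"
    "Atilde q R z = w * ln (1 / qt q R (Suc K))"
proof -
  have wpos: "w > 0" using rhopos by (simp add: w_def)
  have e1: "(\<lambda>l. real (Suc l) * z (Suc l)) = (\<lambda>l. if l = K then rhostar else 0)"
    by (auto simp: z_def w_def)
  have e1': "(\<lambda>l. real (Suc l) * \<bar>z (Suc l)\<bar>) = (\<lambda>l. if l = K then rhostar else 0)"
    using wpos by (auto simp: z_def w_def)
  have s1: "(\<lambda>l. if l = K then rhostar else 0) sums rhostar"
    using sums_single[of K "\<lambda>_. rhostar"] by simp
  have sm: "summable (\<lambda>l. real (Suc l) * \<bar>z (Suc l)\<bar>)" unfolding e1' using s1 by (rule sums_summable)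
  have "z 0 = 0" "\<forall>l\<ge>1. 0 \<le> z l" using wpos by (auto simp: z_def)
  then show "z \<in> X0plus" unfolding X0plus_def using sm by blast
  show "rho z = rhostar" unfolding rho_def e1 using s1 by (simp add: sums_unique[symmetric])
  have z0: "z \<noteq> (\<lambda>_. 0)"
  proof
    assume "z = (\<lambda>_. 0)" hence "z (Suc K) = 0" by simp
    thus False using wpos by (simp add: z_def)
  qed
  have "(\<lambda>l. z (Suc l)) = (\<lambda>l. if l = K then w else 0)" by (auto simp: z_def)
  hence Nm: "Nmass z = w" unfolding Nmass_def using sums_single[of K "\<lambda>_. w"]
    by (simp add: sums_unique[symmetric])
  have "(\<lambda>l. z (Suc l) * ln (z (Suc l) / (qt q R (Suc l) * w))) =
        (\<lambda>l. if l = K then w * ln (1 / qt q R (Suc K)) else 0)"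
    using wpos by (auto simp: z_def)
  moreover have "(\<lambda>l. if l = K then w * ln (1 / qt q R (Suc K)) else 0) sums (w * ln (1 / qt q R (Suc K)))"
    using sums_single[of K "\<lambda>_. w * ln (1 / qt q R (Suc K))"] by simp
  ultimately show "Atilde q R z = w * ln (1 / qt q R (Suc K))"
    unfolding Atilde_def Nm using z0 by (simp add: sums_unique[symmetric])
qed



theorem theorem9:
  fixes q :: "nat \<Rightarrow> real" and R rhostar :: real
  assumes qpos: "\<forall>l\<ge>1. 0 < q l"
    and q1: "q 1 = 1"
    and Rlim: "(\<lambda>l. q l / q (Suc l)) \<longlonglongrightarrow> R"
    and Rpos: "0 < R"
    and neq: "NEQ q R"
    and rhopos: "0 < rhostar"
  shows "(INF z\<in>{z \<in> X0plus. rho z = rhostar}. ereal (Atilde q R z)) = 0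
         \<and> \<not> (\<exists>z\<in>X0plus. rho z = rhostar \<and> Atilde q R z = 0)"
proof -
  have pos: "Atilde q R z > 0" if "z \<in> X0plus" "rho z = rhostar" for z
  proof (cases "z = (\<lambda>_. 0)")
    case True
    then have "rho z = 0" by (simp add: rho_def)
    then show ?thesis using that rhopos by simp
  next
    case False
    then show ?thesis using A_pos[OF qpos Rlim Rpos neq that(1)] by simp
  qed
  have ge: "(INF z\<in>{z \<in> X0plus. rho z = rhostar}. ereal (Atilde q R z)) \<ge> 0"
    using pos by (intro INF_greatest) (auto simp: less_imp_le)
  have le: "(INF z\<in>{z \<in> X0plus. rho z = rhostar}. ereal (Atilde q R z)) \<le> 0"
  proof (rule ereal_le_epsilon2)
    fix e :: real assume epos: "0 < e"
    define d where "d = e / (2 * rhostar)"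
    have dpos: "d > 0" using epos rhopos by (simp add: d_def)
    obtain c where cpos: "c > 0" and cq: "\<And>l. l \<ge> 1 \<Longrightarrow> c * exp (- d * real l) \<le> qt q R l"
      using qt_lower[OF qpos Rlim Rpos dpos] by auto
    define B where "B = \<bar>ln c\<bar>"
    obtain K :: nat where K: "2 * rhostar * B / e < real K" using reals_Archimedean2 by blast
    define L where "L = real (Suc K)"
    have Lpos: "L > 0" by (simp add: L_def)
    have BL: "rhostar * B / L < e / 2"
    proof -
      have "2 * rhostar * B / e < L" using K by (simp add: L_def)
      hence "2 * rhostar * B < L * e" using epos by (simp add: field_simps)
      thus ?thesis using Lpos by (simp add: field_simps)
    qed
    define w where "w = rhostar / L"
    define z where "z = (\<lambda>l. if l = Suc K then w else (0::real))"
    have wL: "w = rhostar / real (Suc K)" by (simp add: w_def L_def)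
    have zf: "z \<in> X0plus" "rho z = rhostar" "Atilde q R z = w * ln (1 / qt q R (Suc K))"
      unfolding z_def wL by (rule delta_facts[OF rhopos])+
    have qL: "c * exp (- d * L) \<le> qt q R (Suc K)" using cq[of "Suc K"] by (simp add: L_def)
    have "ln (c * exp (- d * L)) \<le> ln (qt q R (Suc K))"
      using qL cpos by (subst ln_le_cancel_iff) (auto intro: order.strict_trans2[OF _ qL])
    hence "ln c - d * L \<le> ln (qt q R (Suc K))" using cpos by (simp add: ln_mult)
    moreover have "qt q R (Suc K) > 0" using qpos Rpos by (simp add: qt_def)
    ultimately have lnb: "ln (1 / qt q R (Suc K)) \<le> d * L + B"
      by (simp add: ln_div B_def)
    have "Atilde q R z \<le> w * (d * L + B)"
      unfolding zf(3) by (rule mult_left_mono[OF lnb]) (use rhopos Lpos in \<open>simp add: w_def\<close>)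
    also have "\<dots> = rhostar * d + rhostar * B / L" using Lpos by (simp add: w_def field_simps)
    also have "\<dots> < e"
    proof -
      have "rhostar * d = e / 2" using rhopos by (simp add: d_def)
      thus ?thesis using BL by linarith
    qed
    finally have "Atilde q R z < e" .
    hence "(INF z\<in>{z \<in> X0plus. rho z = rhostar}. ereal (Atilde q R z)) \<le> ereal (Atilde q R z)"
      using zf by (intro INF_lower) auto
    also have "\<dots> \<le> 0 + ereal e" using \<open>Atilde q R z < e\<close> by simp
    finally show "(INF z\<in>{z \<in> X0plus. rho z = rhostar}. ereal (Atilde q R z)) \<le> 0 + ereal e" .
  qed
  have "\<not> (\<exists>z\<in>X0plus. rho z = rhostar \<and> Atilde q R z = 0)"
    using pos by force
  with ge le show ?thesis by (auto intro: antisym)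
qed


end
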